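(* Let $\theta:H\to H$ be an endomorphism and let $E$ be a proper hyperideal of $H$. If $E$ is an $n$-ary Endo-prime hyperideal associated with $\theta$, then $rad(E)$ is an $n$-ary Endo-prime hyperideal associated with $\theta$.
   Context: Throughout, $(H,h,k)$ is a commutative Krasner $(m,n)$-hyperring with scalar identity $1_H$: $(H,h)$ is a canonical $m$-ary hypergroup (a commutative associative $m$-ary hyperoperation $h:H^m\to\mathcal P^*(H)$ with a unique zero $0$ such that $h(u,0^{(m-1)})=\{u\}$, unique inverses $u^{-1}$ with $0\in h(u,u^{-1},0^{(m-2)})$, and the reversibility axiom), $k:H^n\to H$ is a commutative associative $n$-ary operation that distributes over $h$ in each argument, $k(0,u_2^n)=0$, and $k(u,1_H^{(n-1)})=u$ for all $u\in H$. Notation: $u_i^j$ denotes the sequence $u_i,\dots,u_j$ (empty if $j<i$); $u^{(t)}$ denotes $u$ repeated $t$ times; for $r=l(n-1)+1$, $k_{(l)}(u_1^r)=k(k(\cdots k(k(u_1^n),u_{n+1}^{2n-1})\cdots),u_{r-n+1}^{r})$ ($l$ nested applications of $k$). Operations are extended to subsets elementwise. A hyperideal of $H$ is a nonempty $I\subseteq H$ such that $(I,h)$ is an $m$-ary subhypergroup of $(H,h)$ and $k(u_1^{i-1},I,u_{i+1}^n)\subseteq I$ for all $u_j\in H$. An endomorphism of $H$ is a map $\theta:H\to H$ with $\theta(h(u_1^m))=h(\theta(u_1),\dots,\theta(u_m))$, $\theta(k(u_1^n))=k(\theta(u_1),\dots,\theta(u_n))$ and $\theta(1_H)=1_H$.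 "A power of $u$ lies in $E$" means $k(u^{(r)},1_H^{(n-r)})\in E$ for some $r\le n$, or $k_{(l)}(u^{(r)})\in E$ for some $r=l(n-1)+1>n$. A proper hyperideal $P$ is an $n$-ary prime hyperideal if $k(u_1^n)\in P$ ($u_i\in H$) implies $u_i\in P$ for some $i$. The radical $rad(E)$ is the intersection of all $n$-ary prime hyperideals containing $E$ ($rad(E)=H$ if there are none); equivalently $rad(E)=\{u\in H:\text{a power of }u\text{ lies in }E\}$. For an endomorphism $\theta$, a proper hyperideal $E$ of $H$ is an $n$-ary Endo-prime hyperideal associated with $\theta$ if for all $u_1,\dots,u_n\in H$, $k(u_1^n)\in E$ implies that for some $i\in\{1,\dots,n\}$, $u_i\in E$ or $\theta\big(k(u_1^{i-1},1_H,u_{i+1}^n)\big)\in E$. *)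

theory Defs
  imports Main "HOL-Library.Multiset"
begin

text \<open>A commutative Krasner (m,n)-hyperring with scalar identity, carried by the
whole type 'a.  The m-ary hyperoperation h and the n-ary operation k take
argument lists (of length m resp. n).\<close>

definition hset :: "('a list \<Rightarrow> 'a set) \<Rightarrow> 'a set list \<Rightarrow> 'a set" where
  "hset h As = \<Union> {h xs | xs. list_all2 (\<lambda>x A. x \<in> A) xs As}"

definition canonical_hypergroup ::
  "nat \<Rightarrow> ('a list \<Rightarrow> 'a set) \<Rightarrow> 'a \<Rightarrow> ('a \<Rightarrow> 'a) \<Rightarrow> bool" where
  "canonical_hypergroup m h zero iv \<longleftrightarrow>
     m \<ge> 2
   \<and> (\<forall>xs. length xs = m \<longrightarrow> h xs \<noteq> {})
   \<comment> \<open>associativity\<close>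
   \<and> (\<forall>xs i. length xs = 2*m - 1 \<and> i \<le> m - 1 \<longrightarrow>
        hset h (map (\<lambda>x. {x}) (take i xs) @ [h (take m (drop i xs))] @ map (\<lambda>x. {x}) (drop (i+m) xs))
      = hset h ([h (take m xs)] @ map (\<lambda>x. {x}) (drop m xs)))
   \<comment> \<open>commutativity\<close>
   \<and> (\<forall>xs ys. length xs = m \<and> mset xs = mset ys \<longrightarrow> h xs = h ys)
   \<comment> \<open>unique zero\<close>
   \<and> (\<forall>u. h (u # replicate (m-1) zero) = {u})
   \<and> (\<forall>e. (\<forall>u. h (u # replicate (m-1) e) = {u}) \<longrightarrow> e = zero)
   \<comment> \<open>unique inverses\<close>
   \<and> (\<forall>u. zero \<in> h (u # iv u # replicate (m-2) zero))
   \<and> (\<forall>u v. zero \<in> h (u # v # replicate (m-2) zero) \<longrightarrow> v = iv u)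
   \<comment> \<open>reversibility\<close>
   \<and> (\<forall>xs x i. length xs = m \<and> i < m \<and> x \<in> h xs \<longrightarrow>
        xs ! i \<in> h (map iv (take i xs) @ [x] @ map iv (drop (Suc i) xs)))"

definition krasner_hyperring ::
  "nat \<Rightarrow> nat \<Rightarrow> ('a list \<Rightarrow> 'a set) \<Rightarrow> ('a list \<Rightarrow> 'a) \<Rightarrow> 'a \<Rightarrow> ('a \<Rightarrow> 'a) \<Rightarrow> 'a \<Rightarrow> bool" where
  "krasner_hyperring m n h k zero iv one \<longleftrightarrow>
     canonical_hypergroup m h zero iv
   \<and> n \<ge> 2
   \<comment> \<open>associativity of k\<close>
   \<and> (\<forall>xs i. length xs = 2*n - 1 \<and> i \<le> n - 1 \<longrightarrow>
        k (take i xs @ [k (take n (drop i xs))] @ drop (i+n) xs) = k (k (take n xs) # drop n xs))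
   \<comment> \<open>commutativity of k\<close>
   \<and> (\<forall>xs ys. length xs = n \<and> mset xs = mset ys \<longrightarrow> k xs = k ys)
   \<comment> \<open>distributivity of k over h in each argument\<close>
   \<and> (\<forall>xs ys i. length xs = n \<and> length ys = m \<and> i < n \<longrightarrow>
        (\<lambda>y. k (xs[i := y])) ` h ys = h (map (\<lambda>y. k (xs[i := y])) ys))
   \<comment> \<open>zero is absorbing\<close>
   \<and> (\<forall>xs. length xs = n - 1 \<longrightarrow> k (zero # xs) = zero)
   \<comment> \<open>scalar identity\<close>
   \<and> (\<forall>u. k (u # replicate (n-1) one) = u)"

definition hyperideal ::
  "nat \<Rightarrow> nat \<Rightarrow> ('a list \<Rightarrow> 'a set) \<Rightarrow> ('a list \<Rightarrow> 'a) \<Rightarrow> ('a \<Rightarrow> 'a) \<Rightarrow> 'a set \<Rightarrow> bool" where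
  "hyperideal m n h k iv I \<longleftrightarrow>
     I \<noteq> {}
   \<and> (\<forall>xs. length xs = m \<and> set xs \<subseteq> I \<longrightarrow> h xs \<subseteq> I)
   \<and> (\<forall>x\<in>I. iv x \<in> I)
   \<and> (\<forall>xs i x. length xs = n \<and> i < n \<and> x \<in> I \<longrightarrow> k (xs[i := x]) \<in> I)"

definition endomorphism ::
  "nat \<Rightarrow> nat \<Rightarrow> ('a list \<Rightarrow> 'a set) \<Rightarrow> ('a list \<Rightarrow> 'a) \<Rightarrow> 'a \<Rightarrow> ('a \<Rightarrow> 'a) \<Rightarrow> bool" where
  "endomorphism m n h k one \<theta> \<longleftrightarrow>
     (\<forall>xs. length xs = m \<longrightarrow> \<theta> ` h xs = h (map \<theta> xs))
   \<and> (\<forall>xs. length xs = n \<longrightarrow> \<theta> (k xs) = k (map \<theta> xs))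
   \<and> \<theta> one = one"

definition nary_prime ::
  "nat \<Rightarrow> nat \<Rightarrow> ('a list \<Rightarrow> 'a set) \<Rightarrow> ('a list \<Rightarrow> 'a) \<Rightarrow> ('a \<Rightarrow> 'a) \<Rightarrow> 'a set \<Rightarrow> bool" where
  "nary_prime m n h k iv P \<longleftrightarrow>
     hyperideal m n h k iv P \<and> P \<noteq> UNIV
   \<and> (\<forall>xs. length xs = n \<and> k xs \<in> P \<longrightarrow> (\<exists>x\<in>set xs. x \<in> P))"

text \<open>Radical: intersection of all n-ary prime hyperideals containing E
  (the whole carrier if there are none, which is the empty intersection).\<close>
definition rad ::
  "nat \<Rightarrow> nat \<Rightarrow> ('a list \<Rightarrow> 'a set) \<Rightarrow> ('a list \<Rightarrow> 'a) \<Rightarrow> ('a \<Rightarrow> 'a) \<Rightarrow> 'a set \<Rightarrow> 'a set" where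
  "rad m n h k iv E = \<Inter> {P. nary_prime m n h k iv P \<and> E \<subseteq> P}"

definition endo_prime ::
  "nat \<Rightarrow> nat \<Rightarrow> ('a list \<Rightarrow> 'a set) \<Rightarrow> ('a list \<Rightarrow> 'a) \<Rightarrow> ('a \<Rightarrow> 'a) \<Rightarrow> 'a \<Rightarrow> ('a \<Rightarrow> 'a) \<Rightarrow> 'a set \<Rightarrow> bool" where
  "endo_prime m n h k iv one \<theta> E \<longleftrightarrow>
     hyperideal m n h k iv E \<and> E \<noteq> UNIV
   \<and> (\<forall>xs. length xs = n \<and> k xs \<in> E \<longrightarrow>
        (\<exists>i<n. xs ! i \<in> E \<or> \<theta> (k (xs[i := one])) \<in> E))"

end

theory Submission
  imports Defs
begin

locale kh =
  fixes m n :: nat and h :: "'a list \<Rightarrow> 'a set" and k :: "'a list \<Rightarrow> 'a"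
    and zero one :: 'a and iv :: "'a \<Rightarrow> 'a"
  assumes KH: "krasner_hyperring m n h k zero iv one"
begin

lemma n2: "n \<ge> 2" using KH unfolding krasner_hyperring_def by auto
lemma m2: "m \<ge> 2" using KH unfolding krasner_hyperring_def canonical_hypergroup_def by auto
lemma KA_assoc: "\<forall>xs i. length xs = 2*n - 1 \<and> i \<le> n - 1 \<longrightarrow>
   k (take i xs @ [k (take n (drop i xs))] @ drop (i+n) xs) = k (k (take n xs) # drop n xs)"
  using KH unfolding krasner_hyperring_def by (elim conjE) assumption
lemma KA_comm: "\<forall>xs ys. length xs = n \<and> mset xs = mset ys \<longrightarrow> k xs = k ys"
  using KH unfolding krasner_hyperring_def by (elim conjE) assumption
lemma KA_distr: "\<forall>xs ys i. length xs = n \<and> length ys = m \<and> i < n \<longrightarrow>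
   (\<lambda>y. k (xs[i := y])) ` h ys = h (map (\<lambda>y. k (xs[i := y])) ys)"
  using KH unfolding krasner_hyperring_def by (elim conjE) assumption
lemma KA_zero: "\<forall>xs. length xs = n - 1 \<longrightarrow> k (zero # xs) = zero"
  using KH unfolding krasner_hyperring_def by (elim conjE) assumption
lemma KA_one: "\<forall>u. k (u # replicate (n-1) one) = u"
  using KH unfolding krasner_hyperring_def by (elim conjE) assumption
lemma KA_inv: "\<forall>u. zero \<in> h (u # iv u # replicate (m-2) zero)"
  using KH unfolding krasner_hyperring_def canonical_hypergroup_def by (elim conjE) assumption
lemma KA_invu: "\<forall>u v. zero \<in> h (u # v # replicate (m-2) zero) \<longrightarrow> v = iv u"
  using KH unfolding krasner_hyperring_def canonical_hypergroup_def by (elim conjE) assumption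

lemma kassoc: "length xs = 2*n-1 \<Longrightarrow> i \<le> n-1 \<Longrightarrow>
   k (take i xs @ [k (take n (drop i xs))] @ drop (i+n) xs) = k (k (take n xs) # drop n xs)"
  by (rule KA_assoc[rule_format]) (simp_all)
lemma kcomm: "length xs = n \<Longrightarrow> mset xs = mset ys \<Longrightarrow> k xs = k ys"
  by (rule KA_comm[rule_format]) (simp_all)
lemma kdistr: "length xs = n \<Longrightarrow> length ys = m \<Longrightarrow> i < n \<Longrightarrow>
   (\<lambda>y. k (xs[i := y])) ` h ys = h (map (\<lambda>y. k (xs[i := y])) ys)"
  by (rule KA_distr[rule_format]) (simp_all)
lemma kzero: "length xs = n - 1 \<Longrightarrow> k (zero # xs) = zero"
  by (rule KA_zero[rule_format]) (simp_all)
lemma kone: "k (u # replicate (n-1) one) = u"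
  by (rule KA_one[rule_format])
lemma hinv: "zero \<in> h (u # iv u # replicate (m-2) zero)"
  by (rule KA_inv[rule_format])
lemma hinv_uniq: "zero \<in> h (u # v # replicate (m-2) zero) \<Longrightarrow> v = iv u"
  by (rule KA_invu[rule_format]) (simp_all)

definition mul where "mul a b = k (a # b # replicate (n-2) one)"

lemma rep_n1: "one # replicate (n-2) one = replicate (n-1) one"
proof -
  obtain p where np: "n = Suc (Suc p)" using n2 by (metis add_2_eq_Suc le_Suc_ex)
  show ?thesis by (simp add: np)
qed

lemma mul_comm: "mul a b = mul b a"
  unfolding mul_def by (rule kcomm) (use n2 in auto)

lemma mul_one[simp]: "mul a one = a"
  unfolding mul_def rep_n1 by (rule kone)

lemma one_mul[simp]: "mul one a = a"
  using mul_comm mul_one by metis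

lemma mul_assoc: "mul (mul a b) c = mul a (mul b c)"
proof -
  obtain p where np: "n = Suc (Suc p)" using n2 by (metis add_2_eq_Suc le_Suc_ex)
  define L where "L = a # b # replicate (n-2) one @ c # replicate (n-2) one"
  have len: "length L = 2*n-1" by (simp add: L_def np)
  have A: "k (take 1 L @ [k (take n (drop 1 L))] @ drop (1+n) L) = k (k (take n L) # drop n L)"
    by (rule kassoc[OF len]) (use n2 in auto)
  have t1: "take n L = a # b # replicate (n-2) one" by (simp add: L_def np)
  have d1: "drop n L = c # replicate (n-2) one" by (simp add: L_def np)
  have t2: "take n (drop 1 L) = b # replicate (n-2) one @ [c]"
  proof -
    have "take n (drop 1 L) = take n (b # replicate (n-2) one @ c # replicate (n-2) one)" by (simp add: L_def)
    also have "... = b # replicate (n-2) one @ [c]"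
      by (simp add: np)
    finally show ?thesis .
  qed
  have d2: "drop (1+n) L = replicate (n-2) one" by (simp add: L_def np)
  have bc: "k (b # replicate (n-2) one @ [c]) = k (b # c # replicate (n-2) one)"
    by (rule kcomm) (use n2 in auto)
  have t0: "take 1 L = [a]" by (simp add: L_def)
  show ?thesis using A unfolding t0 t1 d1 t2 d2 bc by (simp add: mul_def)
qed

lemma mul_lcomm: "mul a (mul b c) = mul b (mul a c)"
  by (metis mul_assoc mul_comm)

lemmas mul_ac = mul_assoc mul_comm mul_lcomm

definition kprod where "kprod xs = foldr mul xs one"

lemma kL: "length ys = n-1 \<Longrightarrow> k (x # ys) = mul x (k (ys @ [one]))"
proof -
  assume ly: "length ys = n-1"
  obtain p where np: "n = Suc (Suc p)" using n2 by (metis add_2_eq_Suc le_Suc_ex)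
  define L where "L = x # ys @ replicate (n-1) one"
  have len: "length L = 2*n-1" using ly by (simp add: L_def np)
  have A: "k (take 1 L @ [k (take n (drop 1 L))] @ drop (1+n) L) = k (k (take n L) # drop n L)"
    by (rule kassoc[OF len]) (use n2 in auto)
  have t1: "take n L = x # ys" using ly by (simp add: L_def np)
  have d1: "drop n L = replicate (n-1) one" using ly by (simp add: L_def np)
  have t2: "take n (drop 1 L) = ys @ [one]"
    using ly by (simp add: L_def np)
  have d2: "drop (1+n) L = replicate (n-2) one" using ly by (simp add: L_def np)
  have t0: "take 1 L = [x]" by (simp add: L_def)
  show ?thesis using A unfolding t0 t1 d1 t2 d2 using kone[of "k (x # ys)"] by (simp add: mul_def)
qed


lemma kg: "length xs \<le> n \<Longrightarrow> k (xs @ replicate (n - length xs) one) = kprod xs"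
proof (induction xs)
  case Nil
  have "replicate n one = one # replicate (n-1) one" using n2
    by (cases n) auto
  then show ?case using kone[of one] by (simp add: kprod_def)
next
  case (Cons x xs)
  define ys where "ys = xs @ replicate (n - Suc (length xs)) one"
  have ly: "length ys = n - 1" using Cons.prems by (simp add: ys_def)
  have e: "ys @ [one] = xs @ replicate (n - length xs) one"
  proof -
    have "n - length xs = Suc (n - Suc (length xs))" using Cons.prems by simp
    then show ?thesis by (simp add: ys_def replicate_append_same)
  qed
  have "k ((x # xs) @ replicate (n - length (x # xs)) one) = k (x # ys)" by (simp add: ys_def)
  also have "\<dots> = mul x (k (ys @ [one]))" by (rule kL[OF ly])
  also have "\<dots> = mul x (kprod xs)" using Cons by (simp add: e)
  finally show ?case by (simp add: kprod_def)
qed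

lemma kK: "length xs = n \<Longrightarrow> k xs = kprod xs"
  using kg[of xs] by simp

lemma kprod_upd: "i < length xs \<Longrightarrow> kprod (xs[i := mul s y]) = mul s (kprod (xs[i := y]))"
proof (induction xs arbitrary: i)
  case Nil then show ?case by simp
next
  case (Cons a xs)
  then show ?case by (cases i) (auto simp: kprod_def mul_ac)
qed

lemma kprod_mem:
  assumes bp: "\<And>a b. mul a b \<in> P \<Longrightarrow> a \<in> P \<or> b \<in> P" and o: "one \<notin> P"
  shows "kprod xs \<in> P \<Longrightarrow> \<exists>x\<in>set xs. x \<in> P"
proof (induction xs)
  case Nil then show ?case using o by (simp add: kprod_def)
next
  case (Cons a xs)
  then show ?case using bp[of a "kprod xs"] by (auto simp: kprod_def)
qed

lemma hi_h: "hyperideal m n h k iv P \<Longrightarrow> length xs = m \<Longrightarrow> set xs \<subseteq> P \<Longrightarrow> h xs \<subseteq> P"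
  unfolding hyperideal_def by simp
lemma hi_iv: "hyperideal m n h k iv P \<Longrightarrow> x \<in> P \<Longrightarrow> iv x \<in> P"
  unfolding hyperideal_def by blast
lemma hi_k: "hyperideal m n h k iv P \<Longrightarrow> length xs = n \<Longrightarrow> i < n \<Longrightarrow> x \<in> P \<Longrightarrow> k (xs[i := x]) \<in> P"
  unfolding hyperideal_def by simp

lemma k_mul2: "k ((s # s # replicate (n-2) one)[1 := y]) = mul s y"
  by (simp add: mul_def)

lemma hi_mul: "hyperideal m n h k iv P \<Longrightarrow> p \<in> P \<Longrightarrow> mul a p \<in> P"
proof -
  assume P: "hyperideal m n h k iv P" and p: "p \<in> P"
  have l: "length (a # a # replicate (n-2) one) = n" using n2 by simp
  have kc: "\<And>xs i x. length xs = n \<Longrightarrow> i < n \<Longrightarrow> x \<in> P \<Longrightarrow> k (xs[i := x]) \<in> P"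
    using P unfolding hyperideal_def by blast
  have "k ((a # a # replicate (n-2) one)[1 := p]) \<in> P"
    by (rule kc[OF l _ p]) (use n2 in simp)
  then show ?thesis by (simp add: mul_def)
qed

lemma hi_one: "hyperideal m n h k iv P \<Longrightarrow> one \<in> P \<Longrightarrow> P = UNIV"
  using hi_mul[of P one] mul_one by (metis UNIV_eq_I)

lemma mul_zero: "mul s zero = zero"
proof -
  have "mul s zero = mul zero s" by (rule mul_comm)
  also have "\<dots> = k (zero # s # replicate (n-2) one)" by (simp add: mul_def)
  also have "\<dots> = zero" by (rule kzero) (use n2 in simp)
  finally show ?thesis .
qed

lemma mul_iv: "mul s (iv y) = iv (mul s y)"
proof -
  define ys where "ys = y # iv y # replicate (m-2) zero"
  define L where "L = s # s # replicate (n-2) one"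
  have lL: "length L = n" using n2 by (simp add: L_def)
  have ly: "length ys = m" using m2 by (simp add: ys_def)
  have f: "(\<lambda>y. k (L[1 := y])) = mul s" by (simp add: fun_eq_iff L_def mul_def)
  have D: "mul s ` h ys = h (map (mul s) ys)"
    using kdistr[OF lL ly, of 1] n2 unfolding f by simp
  have "zero \<in> h ys" unfolding ys_def by (rule hinv)
  then have "mul s zero \<in> h (map (mul s) ys)" using D by blast
  then have "zero \<in> h (mul s y # mul s (iv y) # replicate (m-2) zero)"
    by (simp add: ys_def mul_zero)
  then show ?thesis by (rule hinv_uniq)
qed

lemma colon_sub: "hyperideal m n h k iv P \<Longrightarrow> P \<subseteq> {y. mul s y \<in> P}"
  using hi_mul by blast

lemma colon_hi:
  assumes P: "hyperideal m n h k iv P"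
  shows "hyperideal m n h k iv {y. mul s y \<in> P}"
proof -
  define L where "L = s # s # replicate (n-2) one"
  have lL: "length L = n" using n2 by (simp add: L_def)
  have f: "(\<lambda>y. k (L[1 := y])) = mul s" by (simp add: fun_eq_iff L_def mul_def)
  have ne: "P \<noteq> {}" using P unfolding hyperideal_def by blast
  have H: "h xs \<subseteq> {y. mul s y \<in> P}" if "length xs = m" "set xs \<subseteq> {y. mul s y \<in> P}" for xs
  proof -
    have D: "mul s ` h xs = h (map (mul s) xs)"
      using kdistr[OF lL that(1), of 1] n2 unfolding f by simp
    have "set (map (mul s) xs) \<subseteq> P" using that(2) by auto
    then have "h (map (mul s) xs) \<subseteq> P" using hi_h[OF P] that(1) by simp
    then show ?thesis using D by blast
  qed
  have I: "iv y \<in> {y. mul s y \<in> P}" if "y \<in> {y. mul s y \<in> P}" for y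
    using hi_iv[OF P] that by (simp add: mul_iv)
  have K: "k (xs[i := y]) \<in> {y. mul s y \<in> P}" if "length xs = n" "i < n" "y \<in> {y. mul s y \<in> P}" for xs i y
  proof -
    have "mul s (k (xs[i := y])) = k (xs[i := mul s y])"
      using that by (simp add: kK kprod_upd)
    moreover have "k (xs[i := mul s y]) \<in> P" using hi_k[OF P] that by simp
    ultimately show ?thesis by simp
  qed
  show ?thesis unfolding hyperideal_def
  proof (intro conjI allI impI ballI)
    show "{y. mul s y \<in> P} \<noteq> {}" using colon_sub[OF P] ne by blast
    show "h xs \<subseteq> {y. mul s y \<in> P}" if "length xs = m \<and> set xs \<subseteq> {y. mul s y \<in> P}" for xs
      using H that by blast
    show "iv y \<in> {y. mul s y \<in> P}" if "y \<in> {y. mul s y \<in> P}" for y using I that by blast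
    show "k (xs[i := y]) \<in> {y. mul s y \<in> P}" if "length xs = n \<and> i < n \<and> y \<in> {y. mul s y \<in> P}" for xs i y
      using K that by blast
  qed
qed

definition pw where "pw x r = (mul x ^^ r) one"

lemma pw_0[simp]: "pw x 0 = one" and pw_Suc[simp]: "pw x (Suc r) = mul x (pw x r)"
  by (simp_all add: pw_def)

lemma pw_add: "pw x (r + q) = mul (pw x r) (pw x q)"
  by (induction r) (simp_all add: mul_ac)

lemma pw_mul: "pw (mul a b) r = mul (pw a r) (pw b r)"
  by (induction r) (simp_all add: mul_ac)

lemma pw_one: "pw one r = one"
  by (induction r) simp_all

lemma pw_kprod: "pw (kprod xs) r = kprod (map (\<lambda>x. pw x r) xs)"
  by (induction xs) (simp_all add: kprod_def pw_mul pw_one)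

lemma prime_bin: "nary_prime m n h k iv P \<Longrightarrow> mul a b \<in> P \<Longrightarrow> a \<in> P \<or> b \<in> P"
proof -
  assume P: "nary_prime m n h k iv P" and ab: "mul a b \<in> P"
  have l: "length (a # b # replicate (n-2) one) = n" using n2 by simp
  have "k (a # b # replicate (n-2) one) \<in> P" using ab by (simp add: mul_def)
  then obtain x where x: "x \<in> set (a # b # replicate (n-2) one)" "x \<in> P"
    using P l unfolding nary_prime_def by blast
  moreover have "one \<notin> P" using P hi_one unfolding nary_prime_def by blast
  ultimately show ?thesis by (cases "x = a \<or> x = b") auto
qed

lemma prime_pw: "nary_prime m n h k iv P \<Longrightarrow> pw x r \<in> P \<Longrightarrow> x \<in> P"
proof (induction r)
  case 0 then show ?case using hi_one unfolding nary_prime_def by auto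
next
  case (Suc r) then show ?case using prime_bin by auto
qed

lemma rad_easy: "pw x r \<in> E \<Longrightarrow> x \<in> rad m n h k iv E"
  unfolding rad_def using prime_pw by blast

lemma rad_hard:
  assumes E: "hyperideal m n h k iv E" and nx: "\<forall>r. pw x r \<notin> E"
  shows "\<exists>P. nary_prime m n h k iv P \<and> E \<subseteq> P \<and> x \<notin> P"
proof -
  define S where "S = range (pw x)"
  define A where "A = {I. hyperideal m n h k iv I \<and> E \<subseteq> I \<and> I \<inter> S = {}}"
  have EA: "E \<in> A" using E nx by (auto simp: A_def S_def)
  have ch: "\<Union>C \<in> A" if C: "C \<noteq> {}" "subset.chain A C" for C
  proof -
    have CA: "C \<subseteq> A" using C unfolding subset.chain_def by blast
    have hi: "hyperideal m n h k iv I" if "I \<in> C" for I using CA that by (auto simp: A_def)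
    have H: "h xs \<subseteq> \<Union>C" if xs: "length xs = m" "set xs \<subseteq> \<Union>C" for xs
    proof -
      obtain B where B: "B \<in> C" "set xs \<subseteq> B"
        using finite_subset_Union_chain[OF _ xs(2) C(1) C(2)] by blast
      then have "h xs \<subseteq> B" using hi_h[OF hi[OF B(1)] xs(1)] by blast
      then show ?thesis using B by blast
    qed
    have "hyperideal m n h k iv (\<Union>C)"
      unfolding hyperideal_def
    proof (intro conjI allI impI ballI)
      show "\<Union>C \<noteq> {}" using C(1) hi unfolding hyperideal_def by blast
      show "h xs \<subseteq> \<Union>C" if "length xs = m \<and> set xs \<subseteq> \<Union>C" for xs using H that by blast
      show "iv y \<in> \<Union>C" if "y \<in> \<Union>C" for y using that hi unfolding hyperideal_def by blast
      show "k (xs[i := y]) \<in> \<Union>C" if "length xs = n \<and> i < n \<and> y \<in> \<Union>C" for xs i y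
        using that hi unfolding hyperideal_def by blast
    qed
    moreover have "E \<subseteq> \<Union>C" using C(1) CA by (auto simp: A_def)
    moreover have "\<Union>C \<inter> S = {}" using CA by (auto simp: A_def)
    ultimately show ?thesis by (simp add: A_def)
  qed
  obtain M where MA: "M \<in> A" and Mmax: "\<And>X. X \<in> A \<Longrightarrow> M \<subseteq> X \<Longrightarrow> X = M"
    using subset_Zorn_nonempty[of A] EA ch by blast
  have Mhi: "hyperideal m n h k iv M" and EM: "E \<subseteq> M" and MS: "M \<inter> S = {}"
    using MA by (auto simp: A_def)
  have Sclosed: "mul a b \<in> S" if "a \<in> S" "b \<in> S" for a b
    using that by (auto simp: S_def pw_add[symmetric])
  have oS: "one \<in> S" by (auto simp: S_def intro: range_eqI[of _ _ 0])
  have xS: "x \<in> S" unfolding S_def by (rule range_eqI[of _ _ 1]) simp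
  have oM: "one \<notin> M" using MS oS by blast
  have bp: "a \<in> M \<or> b \<in> M" if ab: "mul a b \<in> M" for a b
  proof (rule ccontr)
    assume nab: "\<not> (a \<in> M \<or> b \<in> M)"
    define Qb where "Qb = {y. mul b y \<in> M}"
    have "Qb \<notin> A"
    proof
      assume "Qb \<in> A"
      then have "Qb = M" using Mmax colon_sub[OF Mhi] by (simp add: Qb_def)
      moreover have "a \<in> Qb" using ab by (simp add: Qb_def mul_comm)
      ultimately show False using nab by simp
    qed
    moreover have "hyperideal m n h k iv Qb" unfolding Qb_def by (rule colon_hi[OF Mhi])
    moreover have "E \<subseteq> Qb" using EM colon_sub[OF Mhi] by (auto simp: Qb_def)
    ultimately obtain s where sS: "s \<in> S" and bs: "mul b s \<in> M" by (auto simp: A_def Qb_def)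
    define Qs where "Qs = {y. mul s y \<in> M}"
    have "Qs \<inter> S = {}"
    proof (rule ccontr)
      assume "Qs \<inter> S \<noteq> {}"
      then obtain t where "t \<in> S" "mul s t \<in> M" by (auto simp: Qs_def)
      then show False using Sclosed[OF sS] MS by blast
    qed
    moreover have "hyperideal m n h k iv Qs" unfolding Qs_def by (rule colon_hi[OF Mhi])
    moreover have "M \<subseteq> Qs" using colon_sub[OF Mhi] by (simp add: Qs_def)
    ultimately have "Qs = M" using Mmax EM by (auto simp: A_def)
    moreover have "b \<in> Qs" using bs by (simp add: Qs_def mul_comm)
    ultimately show False using nab by simp
  qed
  have "nary_prime m n h k iv M"
    unfolding nary_prime_def
  proof (intro conjI allI impI)
    show "hyperideal m n h k iv M" by (rule Mhi)
    show "M \<noteq> UNIV" using oM by blast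
    show "\<exists>x\<in>set xs. x \<in> M" if "length xs = n \<and> k xs \<in> M" for xs
      using kprod_mem[of M, OF bp oM] that kK by auto
  qed
  moreover have "x \<notin> M" using xS MS by blast
  ultimately show ?thesis using EM by blast
qed

lemma rad_char: "hyperideal m n h k iv E \<Longrightarrow> x \<in> rad m n h k iv E \<Longrightarrow> \<exists>r. pw x r \<in> E"
  using rad_hard unfolding rad_def by blast

end

theorem mainTheorem1:
  fixes m n :: nat and h :: "'a list \<Rightarrow> 'a set" and k :: "'a list \<Rightarrow> 'a"
    and zero one :: 'a and iv \<theta> :: "'a \<Rightarrow> 'a" and E :: "'a set"
  assumes "krasner_hyperring m n h k zero iv one"
    and "endomorphism m n h k one \<theta>"
    and "hyperideal m n h k iv E" and "E \<noteq> UNIV"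
    and "endo_prime m n h k iv one \<theta> E"
  shows "endo_prime m n h k iv one \<theta> (rad m n h k iv E)"
proof -
  interpret kh m n h k zero one iv by unfold_locales (rule assms(1))
  have E: "hyperideal m n h k iv E" by (rule assms(3))
  have thk: "\<theta> (k xs) = k (map \<theta> xs)" if "length xs = n" for xs
    using assms(2) that unfolding endomorphism_def by blast
  have th1: "\<theta> one = one" using assms(2) unfolding endomorphism_def by blast
  have thmul: "\<theta> (mul a b) = mul (\<theta> a) (\<theta> b)" for a b
    using thk[of "a # b # replicate (n-2) one"] n2 th1 by (simp add: mul_def)
  have thpw: "\<theta> (pw x r) = pw (\<theta> x) r" for x r
    by (induction r) (simp_all add: th1 thmul)
  have oE: "one \<notin> E" using hi_one[OF E] assms(4) by blast
  have orad: "one \<notin> rad m n h k iv E"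
    using rad_char[OF E, of one] pw_one oE by auto
  have ex: "\<exists>P. nary_prime m n h k iv P \<and> E \<subseteq> P"
    using orad unfolding rad_def by blast
  let ?F = "{P. nary_prime m n h k iv P \<and> E \<subseteq> P}"
  have Fhi: "hyperideal m n h k iv P" if "P \<in> ?F" for P using that unfolding nary_prime_def by blast
  have Erad: "E \<subseteq> rad m n h k iv E" unfolding rad_def by blast
  have hrad: "hyperideal m n h k iv (rad m n h k iv E)"
    unfolding hyperideal_def
  proof (intro conjI allI impI ballI)
    show "rad m n h k iv E \<noteq> {}" using Erad E unfolding hyperideal_def by blast
    show "h xs \<subseteq> rad m n h k iv E" if "length xs = m \<and> set xs \<subseteq> rad m n h k iv E" for xs
    proof -
      have "h xs \<subseteq> P" if "P \<in> ?F" for P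
        using Fhi[OF that] \<open>length xs = m \<and> set xs \<subseteq> rad m n h k iv E\<close> that
        unfolding hyperideal_def rad_def by blast
      then show ?thesis unfolding rad_def by blast
    qed
    show "iv y \<in> rad m n h k iv E" if "y \<in> rad m n h k iv E" for y
      using that Fhi unfolding rad_def hyperideal_def by blast
    show "k (xs[i := y]) \<in> rad m n h k iv E" if "length xs = n \<and> i < n \<and> y \<in> rad m n h k iv E" for xs i y
      using that Fhi unfolding rad_def hyperideal_def by blast
  qed
  have EP: "\<forall>xs. length xs = n \<and> k xs \<in> E \<longrightarrow> (\<exists>i<n. xs ! i \<in> E \<or> \<theta> (k (xs[i := one])) \<in> E)"
    using assms(5) unfolding endo_prime_def by blast
  have main: "\<exists>i<n. xs ! i \<in> rad m n h k iv E \<or> \<theta> (k (xs[i := one])) \<in> rad m n h k iv E"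
    if xs: "length xs = n" "k xs \<in> rad m n h k iv E" for xs
  proof -
    obtain r where r: "pw (k xs) r \<in> E" using rad_char[OF E xs(2)] by blast
    define f where "f = (\<lambda>x. pw x r)"
    have e1: "pw (k xs) r = k (map f xs)" using xs(1) by (simp add: kK pw_kprod f_def)
    obtain i where i: "i < n" and c: "map f xs ! i \<in> E \<or> \<theta> (k ((map f xs)[i := one])) \<in> E"
      using EP[rule_format, of "map f xs"] xs(1) r e1 by auto
    have "(map f xs)[i := one] = map f (xs[i := one])" by (simp add: map_update f_def pw_one)
    then have e2: "\<theta> (k ((map f xs)[i := one])) = pw (\<theta> (k (xs[i := one]))) r"
      using xs(1) by (simp add: kK pw_kprod[symmetric] f_def thpw)
    have "xs ! i \<in> rad m n h k iv E \<or> \<theta> (k (xs[i := one])) \<in> rad m n h k iv E"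
    proof -
      from c have "pw (xs ! i) r \<in> E \<or> pw (\<theta> (k (xs[i := one]))) r \<in> E"
        unfolding e2 using i xs(1) by (simp add: f_def)
      then show ?thesis using rad_easy by blast
    qed
    then show ?thesis using i by blast
  qed
  show ?thesis unfolding endo_prime_def using hrad orad main by blast
qed

end
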